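(* Let $G=(V,E)$ be a connected, locally finite graph with edge weights $w_{xy}\ge w_{min}>0$ for all $xy\in E$ and $\mu\le\mu_{max}$ on $V$, and let $\alpha\in(0,1)$. Suppose $u:(0,\infty)\times V\to(0,\infty)$ is $C^1$ in time and satisfies $$\partial_t(\log u)\ge\Psi_\Upsilon(\log u)-\tfrac1\alpha\Psi_{\Upsilon_\alpha}(\log u)-\eta_\alpha(t)\quad\text{on }(0,\infty)\times V,$$ where $\eta_\alpha:(0,\infty)\to[0,\infty)$ is continuous. Then for any $0<t_1<t_2$ and $x_1,x_2\in V$, $$u(t_1,x_1)\le u(t_2,x_2)\exp\Big(\int_{t_1}^{t_2}\eta_\alpha(t)\,dt+\frac{2\mu_{max}\,d(x_1,x_2)^2}{w_{min}(1-\alpha)(t_2-t_1)}\Big).$$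
   Context: Graphs are undirected; $x\sim y$ means $xy\in E$; $w_{xy}=w_{yx}>0$; $\mu:V\to(0,\infty)$; $d$ is the combinatorial graph distance. For $H:\mathbb R\to\mathbb R$, $\Psi_H(v)(x)=\frac1{\mu(x)}\sum_{y\sim x}w_{xy}H(v(y)-v(x))$; $\Upsilon(z)=e^z-1-z$ and $\Upsilon_\alpha(z)=\Upsilon(\alpha z)$. *)

theory Defs
  imports "HOL-Analysis.Analysis"
begin

text \<open>Graphs: vertex set = the type 'a (UNIV), adjacency relation E (x ~ y iff E x y).\<close>

definition locally_finite :: "('a \<Rightarrow> 'a \<Rightarrow> bool) \<Rightarrow> bool" where
  "locally_finite E \<longleftrightarrow> (\<forall>x. finite {y. E x y})"

definition graph_connected :: "('a \<Rightarrow> 'a \<Rightarrow> bool) \<Rightarrow> bool" where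
  "graph_connected E \<longleftrightarrow> (\<forall>x y. \<exists>n. (E ^^ n) x y)"

definition gdist :: "('a \<Rightarrow> 'a \<Rightarrow> bool) \<Rightarrow> 'a \<Rightarrow> 'a \<Rightarrow> nat" where
  "gdist E x y = (LEAST n. (E ^^ n) x y)"

definition Psi :: "('a \<Rightarrow> 'a \<Rightarrow> bool) \<Rightarrow> ('a \<Rightarrow> 'a \<Rightarrow> real) \<Rightarrow> ('a \<Rightarrow> real)
    \<Rightarrow> (real \<Rightarrow> real) \<Rightarrow> ('a \<Rightarrow> real) \<Rightarrow> 'a \<Rightarrow> real" where
  "Psi E w \<mu> H v x = (1 / \<mu> x) * (\<Sum>y\<in>{y. E x y}. w x y * H (v y - v x))"

definition Upsilon :: "real \<Rightarrow> real" where
  "Upsilon z = exp z - 1 - z"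

definition Upsilon_alpha :: "real \<Rightarrow> real \<Rightarrow> real" where
  "Upsilon_alpha \<alpha> z = Upsilon (\<alpha> * z)"

end

theory Submission imports Defs begin

definition fa :: "real \<Rightarrow> real \<Rightarrow> real" where
  "fa \<alpha> z = exp z - 1 - exp (\<alpha> * z) / \<alpha> + 1 / \<alpha>"

lemma fa_eq: "\<alpha> \<noteq> 0 \<Longrightarrow> Upsilon z - (1/\<alpha>) * Upsilon_alpha \<alpha> z = fa \<alpha> z"
  by (simp add: Upsilon_def Upsilon_alpha_def fa_def field_simps)

lemma fa_nonneg:
  assumes "0 < \<alpha>" "\<alpha> < 1" shows "0 \<le> fa \<alpha> z"
proof -
  have "exp ((1 - \<alpha>) *\<^sub>R 0 + \<alpha> *\<^sub>R z) \<le> (1 - \<alpha>) * exp 0 + \<alpha> * exp z"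
    using convex_onD[OF exp_convex, of \<alpha> 0 z] assms by simp
  then have "exp (\<alpha> * z) \<le> 1 - \<alpha> + \<alpha> * exp z" by simp
  then have "exp (\<alpha> * z) / \<alpha> \<le> (1 - \<alpha> + \<alpha> * exp z) / \<alpha>"
    using assms by (simp add: divide_right_mono)
  also have "\<dots> = 1/\<alpha> - 1 + exp z" using assms by (simp add: field_simps)
  finally show ?thesis unfolding fa_def by simp
qed

lemma fa_quad:
  assumes "0 < \<alpha>" "\<alpha> < 1" "0 \<le> z" shows "(1 - \<alpha>) / 2 * z\<^sup>2 \<le> fa \<alpha> z"
proof -
  define h where "h t = exp t - exp (\<alpha> * t) - (1 - \<alpha>) * t" for t
  have hnn: "0 \<le> h t" if "0 \<le> t" for t
  proof -
    have "h 0 \<le> h t"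
    proof (rule DERIV_nonneg_imp_increasing_open[OF that])
      fix s assume s: "0 < s" "s < t"
      have "exp (\<alpha> * s) \<le> exp s" using s assms by simp
      moreover have "1 \<le> exp (\<alpha> * s)" using s assms by simp
      moreover have "0 \<le> (1 - \<alpha>) * (exp (\<alpha> * s) - 1)" using assms calculation by simp
      moreover have "exp s - \<alpha> * exp (\<alpha> * s) - (1 - \<alpha>) = (exp s - exp (\<alpha> * s)) + (1 - \<alpha>) * (exp (\<alpha> * s) - 1)"
        by (simp add: algebra_simps)
      ultimately have "0 \<le> exp s - \<alpha> * exp (\<alpha> * s) - (1 - \<alpha>)" by linarith
      moreover have "(h has_real_derivative exp s - \<alpha> * exp (\<alpha> * s) - (1 - \<alpha>)) (at s)"
        unfolding h_def by (rule derivative_eq_intros refl | simp)+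
      ultimately show "\<exists>y. (h has_real_derivative y) (at s) \<and> 0 \<le> y" by blast
    next
      show "continuous_on {0..t} h" unfolding h_def by (intro continuous_intros)
    qed
    then show ?thesis by (simp add: h_def)
  qed
  define g where "g t = fa \<alpha> t - (1 - \<alpha>) / 2 * t\<^sup>2" for t
  have "g 0 \<le> g z"
  proof (rule DERIV_nonneg_imp_increasing_open[OF assms(3)])
    fix s assume s: "0 < s" "s < z"
    have "(g has_real_derivative h s) (at s)"
      unfolding g_def fa_def h_def using assms
      by (auto intro!: derivative_eq_intros simp: field_simps power2_eq_square)
    then show "\<exists>y. (g has_real_derivative y) (at s) \<and> 0 \<le> y" using hnn[of s] s by auto
  next
    show "continuous_on {0..z} g" unfolding g_def fa_def using assms by (intro continuous_intros) auto
  qed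
  moreover have "g 0 = 0" using assms by (simp add: g_def fa_def)
  ultimately show ?thesis by (simp add: g_def)
qed


lemma riccati_step:
  fixes Vx Vy Vy' :: "real \<Rightarrow> real" and K s s' :: real
  assumes ss: "s < s'" and K: "K > 0"
    and der: "\<And>t. t \<in> {s..s'} \<Longrightarrow> (Vy has_real_derivative Vy' t) (at t)"
    and mono: "\<And>t. t \<in> {s..s'} \<Longrightarrow> Vx s \<le> Vx t"
    and ric: "\<And>t. t \<in> {s..s'} \<Longrightarrow> Vy t \<le> Vx t \<Longrightarrow> (Vx t - Vy t)\<^sup>2 / K \<le> Vy' t"
  shows "Vx s \<le> Vy s' + K / (s' - s)"
proof (rule ccontr)
  assume "\<not> ?thesis"
  then have "K / (s' - s) < Vx s - Vy s'" by simp
  then have pos: "K < (s' - s) * (Vx s - Vy s')" using ss by (simp add: field_simps)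
  define \<psi> where "\<psi> t = (t - s) * (Vx s - Vy t) - K" for t
  have dpsi: "(\<psi> has_real_derivative (Vx s - Vy t) - (t - s) * Vy' t) (at t)" if "t \<in> {s..s'}" for t
    unfolding \<psi>_def using der[OF that] by (auto intro!: derivative_eq_intros)
  have "continuous_on {s..s'} \<psi>"
    by (rule continuous_at_imp_continuous_on) (use dpsi DERIV_isCont in blast)
  then obtain tm where tm: "tm \<in> {s..s'}" and mx: "\<And>t. t \<in> {s..s'} \<Longrightarrow> \<psi> t \<le> \<psi> tm"
    using continuous_attains_sup[of "{s..s'}" \<psi>] ss by auto
  have "\<psi> s' \<le> \<psi> tm" using mx ss by auto
  then have ptm: "K < (tm - s) * (Vx s - Vy tm)" using pos by (simp add: \<psi>_def)
  have tms: "tm > s"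
  proof (rule ccontr)
    assume "\<not> tm > s" then have "tm = s" using tm by auto
    then show False using ptm K by simp
  qed
  define D where "D = Vx s - Vy tm"
  have Dpos: "D > 0" using ptm tms K unfolding D_def
    by (smt (verit) mult_nonneg_nonpos)
  have "Vy tm \<le> Vx tm" using mono[OF tm] Dpos by (simp add: D_def)
  then have r: "(Vx tm - Vy tm)\<^sup>2 / K \<le> Vy' tm" using ric[OF tm] by simp
  have "D \<le> Vx tm - Vy tm" using mono[OF tm] by (simp add: D_def)
  then have "D\<^sup>2 \<le> (Vx tm - Vy tm)\<^sup>2" using Dpos by (simp add: power_mono)
  then have "D\<^sup>2 / K \<le> Vy' tm" using r K by (smt (verit) divide_right_mono)
  then have "(tm - s) * (D\<^sup>2 / K) \<le> (tm - s) * Vy' tm" using tms by (intro mult_left_mono) auto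
  moreover have "D < (tm - s) * (D\<^sup>2 / K)"
  proof -
    have "K * D < ((tm - s) * D) * D" using ptm Dpos unfolding D_def[symmetric] by simp
    then show ?thesis using K by (simp add: field_simps power2_eq_square)
  qed
  ultimately have neg: "D - (tm - s) * Vy' tm < 0" by simp
  obtain d where d: "d > 0" "\<And>h. h > 0 \<Longrightarrow> h < d \<Longrightarrow> \<psi> tm < \<psi> (tm - h)"
    using DERIV_neg_dec_left[OF dpsi[OF tm] neg[unfolded D_def]] by blast
  define h where "h = min (d/2) (tm - s)"
  have "h > 0" "h < d" using d tms by (auto simp: h_def)
  then have "\<psi> tm < \<psi> (tm - h)" using d by blast
  moreover have "tm - h \<in> {s..s'}" using tm tms \<open>h>0\<close> by (auto simp: h_def)
  ultimately show False using mx by fastforce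
qed

lemma chain:
  fixes V :: "real \<Rightarrow> 'a \<Rightarrow> real" and K T0 :: real
  assumes K: "K \<ge> 0"
    and mono: "\<And>x s t. T0 \<le> s \<Longrightarrow> s \<le> t \<Longrightarrow> V s x \<le> V t x"
    and step: "\<And>x y s s'. E x y \<Longrightarrow> T0 \<le> s \<Longrightarrow> s < s' \<Longrightarrow> V s x \<le> V s' y + K / (s' - s)"
  shows "(E ^^ n) x y \<Longrightarrow> T0 \<le> s \<Longrightarrow> s < s' \<Longrightarrow> V s x \<le> V s' y + K * (real n)\<^sup>2 / (s' - s)"
proof (induction n arbitrary: y s')
  case 0
  then show ?case using mono[of s s' x] by simp
next
  case (Suc n)
  then obtain z where z: "(E ^^ n) x z" "E z y" by auto
  show ?case
  proof (cases "n = 0")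
    case True
    then have "x = z" using z by simp
    then show ?thesis using step[OF z(2) Suc.prems(2,3)] True by simp
  next
    case False
    define m where "m = s + real n * (s' - s) / (real n + 1)"
    have d1: "m - s = real n * (s' - s) / (real n + 1)" by (simp add: m_def)
    have d2: "s' - m = (s' - s) / (real n + 1)" by (simp add: m_def field_simps)
    have sm: "s < m" using False Suc.prems(3) by (simp add: m_def)
    have ms: "m < s'" using d2 Suc.prems(3) by (smt (verit) divide_pos_pos of_nat_0_le_iff)
    have i1: "V s x \<le> V m z + K * (real n)\<^sup>2 / (m - s)" using Suc.IH[OF z(1) Suc.prems(2) sm] .
    have i2: "V m z \<le> V s' y + K / (s' - m)" using step[OF z(2) _ ms] Suc.prems(2) sm by simp
    have e1: "K * (real n)\<^sup>2 / (m - s) = K * real n * (real n + 1) / (s' - s)"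
      unfolding d1 using False Suc.prems(3) by (simp add: field_simps power2_eq_square)
    have e2: "K / (s' - m) = K * (real n + 1) / (s' - s)"
      unfolding d2 using Suc.prems(3) by (simp add: field_simps)
    have "K * real n * (real n + 1) / (s' - s) + K * (real n + 1) / (s' - s)
          = K * (real (Suc n))\<^sup>2 / (s' - s)"
      unfolding add_divide_distrib[symmetric] by (simp add: algebra_simps power2_eq_square)
    then show ?thesis using i1 i2 e1 e2 by linarith
  qed
qed


theorem theorem6p2:
  fixes E :: "'a \<Rightarrow> 'a \<Rightarrow> bool" and w :: "'a \<Rightarrow> 'a \<Rightarrow> real" and \<mu> :: "'a \<Rightarrow> real"
    and w_min \<mu>_max \<alpha> :: real
    and u u' :: "real \<Rightarrow> 'a \<Rightarrow> real" and \<eta> :: "real \<Rightarrow> real"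
    and t1 t2 :: real and x1 x2 :: 'a
  assumes sym: "\<And>x y. E x y \<Longrightarrow> E y x"
    and lf: "locally_finite E"
    and conn: "graph_connected E"
    and w_sym: "\<And>x y. E x y \<Longrightarrow> w x y = w y x"
    and w_min_pos: "w_min > 0"
    and w_min: "\<And>x y. E x y \<Longrightarrow> w x y \<ge> w_min"
    and mu_pos: "\<And>x. \<mu> x > 0"
    and mu_max: "\<And>x. \<mu> x \<le> \<mu>_max"
    and alpha: "0 < \<alpha>" "\<alpha> < 1"
    and u_pos: "\<And>t x. t > 0 \<Longrightarrow> u t x > 0"
    and u_deriv: "\<And>t x. t > 0 \<Longrightarrow> ((\<lambda>s. u s x) has_real_derivative u' t x) (at t)"
    and u'_cont: "\<And>x. continuous_on {0<..} (\<lambda>t. u' t x)"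
    and eta_cont: "continuous_on {0<..} \<eta>"
    and eta_nonneg: "\<And>t. t > 0 \<Longrightarrow> \<eta> t \<ge> 0"
    and ineq: "\<And>t x. t > 0 \<Longrightarrow>
       u' t x / u t x \<ge> Psi E w \<mu> Upsilon (\<lambda>y. ln (u t y)) x
                        - (1 / \<alpha>) * Psi E w \<mu> (Upsilon_alpha \<alpha>) (\<lambda>y. ln (u t y)) x
                        - \<eta> t"
    and t12: "0 < t1" "t1 < t2"
  shows "u t1 x1 \<le> u t2 x2 * exp (integral {t1..t2} \<eta>
           + 2 * \<mu>_max * real (gdist E x1 x2) ^ 2 / (w_min * (1 - \<alpha>) * (t2 - t1)))"
proof -
  define T0 where "T0 = t1 / 2"
  have T0: "0 < T0" "T0 < t1" using t12 by (auto simp: T0_def)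
  define F where "F t = integral {T0..t} \<eta>" for t
  define V where "V t x = ln (u t x) + F t" for t x
  define V' where "V' t x = u' t x / u t x + \<eta> t" for t x
  have mupos: "\<mu>_max > 0" using mu_pos[of x1] mu_max[of x1] by linarith
  define c where "c = w_min / \<mu>_max"
  have cpos: "c > 0" using mupos w_min_pos by (simp add: c_def)
  have etac: "continuous_on {T0..b} \<eta>" for b
    by (rule continuous_on_subset[OF eta_cont]) (use T0 in auto)
  have dF: "(F has_real_derivative \<eta> t) (at t)" if "t > T0" for t
  proof -
    have "(F has_real_derivative \<eta> t) (at t within {T0..t+1})"
      unfolding F_def using integral_has_real_derivative[OF etac, of t "t+1"] that by auto
    moreover have "at t within {T0..t+1} = at t"
      by (rule at_within_interior) (use that in auto)
    ultimately show ?thesis by simp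
  qed
  have dV: "((\<lambda>t. V t x) has_real_derivative V' t x) (at t)" if "t > T0" for t x
  proof -
    have tp: "t > 0" using that T0 by simp
    show ?thesis unfolding V_def V'_def
      using u_deriv[OF tp, of x] u_pos[OF tp, of x] dF[OF that]
      by (auto intro!: derivative_eq_intros simp: field_simps)
  qed
  have key: "V' t x \<ge> (1 / \<mu> x) * (\<Sum>y\<in>{y. E x y}. w x y * fa \<alpha> (V t y - V t x))" if "t > T0" for t x
  proof -
    have tp: "t > 0" using that T0 by simp
    have "Psi E w \<mu> Upsilon (\<lambda>y. ln (u t y)) x
          - (1 / \<alpha>) * Psi E w \<mu> (Upsilon_alpha \<alpha>) (\<lambda>y. ln (u t y)) x
        = (1 / \<mu> x) * (\<Sum>y\<in>{y. E x y}. w x y * fa \<alpha> (ln (u t y) - ln (u t x)))"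
    proof -
      have "(\<Sum>y\<in>{y. E x y}. w x y * fa \<alpha> (ln (u t y) - ln (u t x)))
          = (\<Sum>y\<in>{y. E x y}. w x y * Upsilon (ln (u t y) - ln (u t x))
               - (1/\<alpha>) * (w x y * Upsilon_alpha \<alpha> (ln (u t y) - ln (u t x))))"
        using alpha by (intro sum.cong refl) (simp add: fa_eq[symmetric] algebra_simps)
      moreover have S: "(\<Sum>y\<in>{y. E x y}. w x y * Upsilon (ln (u t y) - ln (u t x)))
          - (1/\<alpha>) * (\<Sum>y\<in>{y. E x y}. w x y * Upsilon_alpha \<alpha> (ln (u t y) - ln (u t x)))
          = (\<Sum>y\<in>{y. E x y}. w x y * Upsilon (ln (u t y) - ln (u t x))
               - (1/\<alpha>) * (w x y * Upsilon_alpha \<alpha> (ln (u t y) - ln (u t x))))"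
        by (simp add: sum_subtractf sum_distrib_left)
      moreover have gen: "\<And>A B m a::real. (1/m)*A - (1/a)*((1/m)*B) = (1/m)*(A - (1/a)*B)"
        by (simp add: algebra_simps)
      ultimately show ?thesis unfolding Psi_def gen by simp
    qed
    moreover have "V t y - V t x = ln (u t y) - ln (u t x)" for y by (simp add: V_def)
    ultimately show ?thesis using ineq[OF tp, of x] by (simp add: V'_def)
  qed
  have V'nn: "V' t x \<ge> 0" if "t > T0" for t x
  proof -
    have "0 \<le> (1 / \<mu> x) * (\<Sum>y\<in>{y. E x y}. w x y * fa \<alpha> (V t y - V t x))"
      using mu_pos[of x] w_min w_min_pos fa_nonneg[OF alpha]
      by (intro mult_nonneg_nonneg sum_nonneg) (auto, smt (verit))
    then show ?thesis using key[OF that, of x] by linarith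
  qed
  have V'edge: "V' t x \<ge> c * fa \<alpha> (V t y - V t x)" if "t > T0" "E x y" for t x y
  proof -
    have fin: "finite {y. E x y}" using lf by (simp add: locally_finite_def)
    have "w x y * fa \<alpha> (V t y - V t x) \<le> (\<Sum>y\<in>{y. E x y}. w x y * fa \<alpha> (V t y - V t x))"
      using fin that(2) w_min w_min_pos fa_nonneg[OF alpha]
      by (intro member_le_sum) (auto, smt (verit) mult_nonneg_nonneg)
    then have "(1 / \<mu> x) * (w x y * fa \<alpha> (V t y - V t x)) \<le> V' t x"
      using key[OF that(1), of x] mu_pos[of x]
      by (smt (verit) divide_pos_pos mult_left_mono one_divide_eq_0_iff zero_less_one)
    moreover have "c \<le> w x y / \<mu> x"
      unfolding c_def using w_min[OF that(2)] w_min_pos mu_pos[of x] mu_max[of x]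
      by (intro frac_le) auto
    then have "c * fa \<alpha> (V t y - V t x) \<le> (w x y / \<mu> x) * fa \<alpha> (V t y - V t x)"
      using fa_nonneg[OF alpha] by (intro mult_right_mono) auto
    ultimately show ?thesis by simp
  qed
  have Vmono: "V s x \<le> V t x" if "T0 < s" "s \<le> t" for s t x
  proof (rule DERIV_nonneg_imp_increasing_open[OF that(2)])
    fix r assume "s < r" "r < t"
    then show "\<exists>y. ((\<lambda>t. V t x) has_real_derivative y) (at r) \<and> 0 \<le> y"
      using dV V'nn that by (meson less_trans)
  next
    show "continuous_on {s..t} (\<lambda>t. V t x)"
    proof (rule continuous_at_imp_continuous_on, intro ballI)
      fix r assume "r \<in> {s..t}"
      then have "r > T0" using that by auto
      then show "isCont (\<lambda>t. V t x) r" using dV DERIV_isCont by blast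
    qed
  qed
  define K where "K = 2 / (c * (1 - \<alpha>))"
  have Kpos: "K > 0" using cpos alpha by (simp add: K_def)
  have step: "V s x \<le> V s' y + K / (s' - s)" if "E x y" "t1 \<le> s" "s < s'" for x y s s'
  proof (rule riccati_step[where Vy' = "\<lambda>t. V' t y", OF that(3) Kpos])
    fix t assume t: "t \<in> {s..s'}"
    then have tT: "t > T0" using that T0 by auto
    show "((\<lambda>t. V t y) has_real_derivative V' t y) (at t)" using dV[OF tT] .
    show "V s x \<le> V t x" using Vmono that t T0 by auto
    assume le: "V t y \<le> V t x"
    have "(V t x - V t y)\<^sup>2 / K = c * ((1 - \<alpha>) / 2 * (V t x - V t y)\<^sup>2)"
      using cpos alpha by (simp add: K_def field_simps)
    also have "\<dots> \<le> c * fa \<alpha> (V t x - V t y)"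
      using fa_quad[OF alpha, of "V t x - V t y"] le cpos by simp
    also have "\<dots> \<le> V' t y" using V'edge[OF tT sym[OF that(1)]] .
    finally show "(V t x - V t y)\<^sup>2 / K \<le> V' t y" .
  qed
  define d where "d = gdist E x1 x2"
  have "\<exists>n. (E ^^ n) x1 x2" using conn by (simp add: graph_connected_def)
  then have path: "(E ^^ d) x1 x2" unfolding d_def gdist_def by (rule LeastI_ex)
  have main: "V t1 x1 \<le> V t2 x2 + K * (real d)\<^sup>2 / (t2 - t1)"
    using chain[of K t1 V E, OF _ _ step path _ t12(2)] Kpos Vmono T0 by force
  have Fdiff: "F t2 - F t1 = integral {t1..t2} \<eta>"
  proof -
    have "\<eta> integrable_on {T0..t2}" by (rule integrable_continuous_real[OF etac])
    then have "integral {T0..t1} \<eta> + integral {t1..t2} \<eta> = integral {T0..t2} \<eta>"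
      using Henstock_Kurzweil_Integration.integral_combine[of T0 t1 t2 \<eta>] T0 t12 by auto
    then show ?thesis by (simp add: F_def)
  qed
  have Kd: "K * (real d)\<^sup>2 / (t2 - t1) = 2 * \<mu>_max * real d ^ 2 / (w_min * (1 - \<alpha>) * (t2 - t1))"
    using mupos w_min_pos alpha by (simp add: K_def c_def field_simps)
  have "ln (u t1 x1) \<le> ln (u t2 x2) + (integral {t1..t2} \<eta>
           + 2 * \<mu>_max * real d ^ 2 / (w_min * (1 - \<alpha>) * (t2 - t1)))"
    using main Fdiff Kd by (simp add: V_def)
  then have "exp (ln (u t1 x1)) \<le> exp (ln (u t2 x2) + (integral {t1..t2} \<eta>
           + 2 * \<mu>_max * real d ^ 2 / (w_min * (1 - \<alpha>) * (t2 - t1))))"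
    by simp
  then show ?thesis using u_pos[of t1 x1] u_pos[of t2 x2] t12
    by (simp add: exp_add d_def)
qed

end
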